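(* For all $s\in\mathbb{C}$ with $\Re(s)>1$, \[\sum_{n=1}^{\infty}\frac{1}{n^{s}}\cdot\frac{1}{\omega(n)+1}\Big[\sum_{p\ \text{prime}}\frac{1}{p^{s}}+\frac{1}{\omega(n)}\sum_{p\mid n}\frac{1}{p^{s}}\Big]=\zeta(s)-1,\] with the convention that for $n=1$ the term $\frac{1}{\omega(n)}\sum_{p\mid n}p^{-s}$ (an empty sum) is $0$.
   Context: $\omega(n)$ is the number of distinct prime divisors of $n$; the sum $\sum_{p\mid n}$ runs over the primes dividing $n$; $\zeta(s)=\sum_{n\ge1}n^{-s}$. *)

theory Defs
  imports "HOL-Analysis.Analysis" "HOL-Computational_Algebra.Primes"
begin

definition omega :: "nat \<Rightarrow> nat" where
  "omega n = card (prime_factors n)"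

text \<open>Riemann zeta for Re s > 1, as the value of its defining Dirichlet series.\<close>
definition zeta_series :: "complex \<Rightarrow> complex" where
  "zeta_series s = (\<Sum>n. 1 / (of_nat (Suc n)) powr s)"

end

theory Submission
  imports Defs
begin

definition ee :: "complex \<Rightarrow> nat \<Rightarrow> complex" where
  "ee s n = 1 / (of_nat n) powr s"

lemma ee0[simp]: "ee s 0 = 0" by (simp add: ee_def)
lemma ee1[simp]: "ee s 1 = 1" by (simp add: ee_def)

lemma ee_mult: "ee s (a * b) = ee s a * ee s b"
proof -
  have "(of_nat (a*b) :: complex) powr s = of_nat a powr s * of_nat b powr s"
    by (simp add: powr_times_real)
  then show ?thesis by (simp add: ee_def)
qed

lemma norm_ee: "norm (ee s n) = real n powr (- Re s)"
proof (cases "n = 0")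
  case True then show ?thesis by simp
next
  case False
  have "norm ((of_nat n :: complex) powr s) = real n powr Re s"
    using norm_powr_real_powr[of "of_nat n" s] by simp
  then show ?thesis using False by (simp add: ee_def norm_divide powr_minus divide_inverse norm_inverse)
qed

lemma norm_ee_summable:
  assumes "Re s > 1"
  shows "(\<lambda>n. norm (ee s n)) summable_on (UNIV :: nat set)"
proof -
  have "summable (\<lambda>n. real n powr (- Re s))"
    using assms by (subst summable_real_powr_iff) auto
  then have "(\<lambda>n. real n powr (- Re s)) summable_on (UNIV :: nat set)"
    by (subst summable_on_UNIV_nonneg_real_iff) auto
  then show ?thesis by (simp add: norm_ee)
qed

lemma ee_summable:
  assumes "Re s > 1"
  shows "ee s summable_on A"
proof -
  have "ee s summable_on (UNIV :: nat set)"
    using norm_ee_summable[OF assms] abs_summable_summable by blast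
  then show ?thesis by (rule summable_on_subset) auto
qed

lemma ee_has_sum_zeta:
  assumes "Re s > 1"
  shows "(ee s has_sum zeta_series s) UNIV"
proof -
  have h: "(ee s has_sum infsum (ee s) UNIV) UNIV"
    using ee_summable[OF assms] by simp
  then have "ee s sums infsum (ee s) UNIV" by (rule has_sum_imp_sums)
  then have "(\<lambda>n. ee s (Suc n)) sums infsum (ee s) UNIV"
    by (subst sums_Suc_iff) simp
  then have "zeta_series s = infsum (ee s) UNIV"
    unfolding zeta_series_def ee_def by (simp add: sums_iff)
  with h show ?thesis by simp
qed

definition omega_c :: "nat \<Rightarrow> nat \<Rightarrow> real" where
  "omega_c n p = 1 / (real (omega n) + 1) +
     (if p dvd n then 1 / (real (omega n) * (real (omega n) + 1)) else 0)"

lemma omega_c_bounds: "0 \<le> omega_c n p" "omega_c n p \<le> 2"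
proof -
  show "0 \<le> omega_c n p" by (simp add: omega_c_def)
  have a: "1 / (real (omega n) + 1) \<le> 1" by (simp add: field_simps)
  have b: "1 / (real (omega n) * (real (omega n) + 1)) \<le> 1"
  proof (cases "omega n = 0")
    case False
    then have k1: "1 \<le> real (omega n)" by simp
    then have "1 \<le> real (omega n) * (real (omega n) + 1)"
      using mult_mono[of 1 "real (omega n)" 1 "real (omega n)+1"] by simp
    then show ?thesis by simp
  qed simp
  have c: "(if p dvd n then 1 / (real (omega n) * (real (omega n) + 1)) else 0) \<le> 1"
    using b by simp
  show "omega_c n p \<le> 2" using a c unfolding omega_c_def by linarith
qed

lemma omega_c_eq:
  assumes "n \<ge> 1" "prime p"
  shows "omega_c n p = 1 / real (omega (n * p))"
proof -
  have pf: "prime_factors (n * p) = insert p (prime_factors n)"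
    using assms by (subst prime_factors_product) (auto simp: prime_prime_factors prime_gt_0_nat)
  have fin: "finite (prime_factors n)" by simp
  show ?thesis
  proof (cases "p dvd n")
    case True
    then have "p \<in> prime_factors n" using assms by (auto simp: in_prime_factors_iff)
    then have eq: "omega (n*p) = omega n" and pos: "omega n \<ge> 1"
      using pf fin by (auto simp: omega_def insert_absorb card_gt_0_iff Suc_le_eq)
    have "real (omega n) > 0" using pos by simp
    moreover have "\<And>k::real. k > 0 \<Longrightarrow> 1/(k+1) + 1/(k*(k+1)) = 1/k"
    proof -
      fix k :: real assume k: "k > 0"
      have "1/(k+1) = k/(k*(k+1))" using k by simp
      then have "1/(k+1) + 1/(k*(k+1)) = (k+1)/(k*(k+1))" by (simp add: add_divide_distrib)
      also have "\<dots> = 1/k" using k by simp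
      finally show "1/(k+1) + 1/(k*(k+1)) = 1/k" .
    qed
    ultimately show ?thesis using True eq by (simp add: omega_c_def)
  next
    case False
    then have "p \<notin> prime_factors n" by (auto simp: in_prime_factors_iff)
    then have eq: "omega (n*p) = omega n + 1"
      using pf fin by (simp add: omega_def)
    then show ?thesis using False by (simp add: omega_c_def)
  qed
qed


lemma z_eq:
  assumes "m \<ge> (1::nat)"
  shows "(\<Sum>p\<in>prime_factors m. ee s (m div p) * ee s p * complex_of_real (omega_c (m div p) p))
         = ee s m - (if m = 1 then 1 else 0)"
proof -
  have "\<And>p. p \<in> prime_factors m \<Longrightarrow>
     ee s (m div p) * ee s p * complex_of_real (omega_c (m div p) p) = ee s m / of_nat (omega m)"
  proof -
    fix p assume p: "p \<in> prime_factors m"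
    then have pr: "prime p" and dv: "p dvd m" by (auto simp: in_prime_factors_iff)
    have mp: "m div p * p = m" using dv by simp
    have "m div p \<ge> 1" using dv assms pr
      by (metis less_one mp mult_0 not_less)
    then have "omega_c (m div p) p = 1 / real (omega m)" using omega_c_eq[OF _ pr] mp by simp
    moreover have "ee s (m div p) * ee s p = ee s m" using ee_mult[of s "m div p" p] mp by simp
    ultimately show "ee s (m div p) * ee s p * complex_of_real (omega_c (m div p) p) = ee s m / of_nat (omega m)"
      by simp
  qed
  then have "(\<Sum>p\<in>prime_factors m. ee s (m div p) * ee s p * complex_of_real (omega_c (m div p) p))
        = of_nat (omega m) * (ee s m / of_nat (omega m))"
    by (simp add: omega_def)
  also have "\<dots> = ee s m - (if m = 1 then 1 else 0)"
  proof (cases "m = 1")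
    case True then show ?thesis by (simp add: omega_def ee_def)
  next
    case False
    then obtain p where "prime p" "p dvd m" using prime_factor_nat by blast
    then have "p \<in> prime_factors m" using assms by (auto simp: in_prime_factors_iff)
    then have "omega m \<noteq> 0" unfolding omega_def by (metis card_0_eq empty_iff finite_set_mset)
    then show ?thesis using False by simp
  qed
  finally show ?thesis .
qed

theorem mainTheorem18:
  fixes s :: complex
  assumes "Re s > 1"
  shows "(\<lambda>m. let n = Suc m in
            (1 / (of_nat n) powr s) * (1 / of_nat (omega n + 1)) *
            ((\<Sum>\<^sub>\<infinity>p\<in>{p::nat. prime p}. 1 / (of_nat p) powr s)
             + (1 / of_nat (omega n)) * (\<Sum>p\<in>prime_factors n. 1 / (of_nat p) powr s)))
         sums (zeta_series s - 1)"
proof -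
  define Pr where "Pr = {p::nat. prime p}"
  define D where "D = Sigma {1::nat..} (\<lambda>_. Pr)"
  define a where "a = (\<lambda>(n,p). ee s n * ee s p * complex_of_real (omega_c n p))"
  define P where "P = infsum (ee s) Pr"
  define T where "T = (\<lambda>n. ee s n * (1 / of_nat (omega n + 1)) *
            (P + (1 / of_nat (omega n)) * (\<Sum>p\<in>prime_factors n. ee s p)))"
  have nsum: "\<And>A. (\<lambda>n. norm (ee s n)) summable_on A"
    using norm_ee_summable[OF assms] by (rule summable_on_subset) auto
  have bsum: "(\<lambda>(n,p). 2 * norm (ee s n) * norm (ee s p)) summable_on D"
    unfolding D_def
  proof (rule summable_on_SigmaI)
    fix n :: nat
    show "((\<lambda>p. (\<lambda>(n,p). 2 * norm (ee s n) * norm (ee s p)) (n, p)) has_sum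
           (2 * norm (ee s n) * infsum (\<lambda>p. norm (ee s p)) Pr)) Pr"
      using has_sum_cmult_right[OF has_sum_infsum[OF nsum[of Pr]], of "2 * norm (ee s n)"] by simp
  next
    show "(\<lambda>n. 2 * norm (ee s n) * infsum (\<lambda>p. norm (ee s p)) Pr) summable_on {1..}"
      using summable_on_cmult_left[OF summable_on_cmult_right[OF nsum[of "{1..}"], of 2]] by simp
  qed auto
  have nasum: "(\<lambda>x. norm (a x)) summable_on D"
  proof (rule Infinite_Sum.summable_on_comparison_test[OF bsum])
    fix x assume "x \<in> D"
    obtain n p where x: "x = (n,p)" by (cases x)
    have "norm (a x) = norm (ee s n) * norm (ee s p) * omega_c n p"
      using omega_c_bounds(1)[of n p] by (simp add: a_def x norm_mult)
    also have "\<dots> \<le> norm (ee s n) * norm (ee s p) * 2"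
      by (intro mult_left_mono omega_c_bounds(2)) auto
    finally show "norm (a x) \<le> (\<lambda>(n,p). 2 * norm (ee s n) * norm (ee s p)) x"
      by (simp add: x mult_ac)
  qed simp
  have asum: "a summable_on D"
    using nasum summable_on_iff_abs_summable_on_complex by blast
  define S where "S = infsum a D"
  have aS: "(a has_sum S) D" using asum by (simp add: S_def)
  have inner: "((\<lambda>p. a (n,p)) has_sum T n) Pr" if n: "n \<in> {1..}" for n
  proof -
    define k where "k = omega n"
    have h1: "((\<lambda>p. ee s p * (ee s n / (of_nat k + 1))) has_sum (P * (ee s n / (of_nat k + 1)))) Pr"
      unfolding P_def by (rule has_sum_cmult_left[OF has_sum_infsum[OF ee_summable[OF assms]]])
    have h2: "((\<lambda>p. if p \<in> prime_factors n then ee s n / (of_nat k * (of_nat k + 1)) * ee s p else 0)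
        has_sum (\<Sum>p\<in>prime_factors n. ee s n / (of_nat k * (of_nat k + 1)) * ee s p)) Pr"
    proof (rule has_sum_finite_neutralI[where B = "prime_factors n"])
      show "prime_factors n \<subseteq> Pr" by (auto simp: Pr_def in_prime_factors_iff)
    qed (simp_all cong: sum.cong)
    have H: "((\<lambda>p. ee s p * (ee s n / (of_nat k + 1)) +
             (if p \<in> prime_factors n then ee s n / (of_nat k * (of_nat k + 1)) * ee s p else 0))
        has_sum (P * (ee s n / (of_nat k + 1)) +
           (\<Sum>p\<in>prime_factors n. ee s n / (of_nat k * (of_nat k + 1)) * ee s p))) Pr"
      by (rule has_sum_add[OF h1 h2])
    have X: "P * (ee s n / (of_nat k + 1)) +
           (\<Sum>p\<in>prime_factors n. ee s n / (of_nat k * (of_nat k + 1)) * ee s p) = T n"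
    proof -
      have sd: "(\<Sum>p\<in>prime_factors n. ee s n / (of_nat k * (of_nat k + 1)) * ee s p)
           = ee s n / (of_nat k * (of_nat k + 1)) * (\<Sum>p\<in>prime_factors n. ee s p)"
        by (rule sum_distrib_left[symmetric])
      have c: "ee s n / (of_nat k * (of_nat k + 1)) = ee s n * (1/(of_nat k+1)) * (1/of_nat k)"
        by (simp add: divide_inverse mult_ac)
      have t: "T n = ee s n * (1/(of_nat k+1)) * P + ee s n * (1/(of_nat k+1)) * (1/of_nat k) * (\<Sum>p\<in>prime_factors n. ee s p)"
        unfolding T_def k_def by (simp add: algebra_simps)
      show ?thesis unfolding sd unfolding c t by (simp add: algebra_simps)
    qed
    have A: "a (n,p) = ee s p * (ee s n / (of_nat k + 1)) +
             (if p \<in> prime_factors n then ee s n / (of_nat k * (of_nat k + 1)) * ee s p else 0)"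
      if "p \<in> Pr" for p
    proof -
      have pd: "p dvd n \<longleftrightarrow> p \<in> prime_factors n" using that n by (auto simp: Pr_def in_prime_factors_iff)
      have oc: "complex_of_real (omega_c n p) = 1/(of_nat k+1) +
          (if p \<in> prime_factors n then 1/(of_nat k*(of_nat k+1)) else 0)"
        unfolding omega_c_def k_def pd[symmetric] by simp
      have "a (n,p) = ee s n * ee s p * (1/(of_nat k+1) +
          (if p \<in> prime_factors n then 1/(of_nat k*(of_nat k+1)) else 0))"
        by (simp only: a_def oc split)
      then show ?thesis
        by (cases "p \<in> prime_factors n") (simp_all add: distrib_left mult.commute[of "ee s p"])
    qed
    show ?thesis using H unfolding X by (subst has_sum_cong[OF A]) auto
  qed
  have TS: "(T has_sum S) {1..}"
    using has_sum_Sigma'[OF aS[unfolded D_def] inner] .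
  define D' where "D' = Sigma {1::nat..} prime_factors"
  define G where "G = (\<lambda>(m,p). a (m div p, p))"
  have "(a has_sum S) D = (G has_sum S) D'"
  proof (rule has_sum_reindex_bij_witness[where i = "\<lambda>(m,p). (m div p, p)" and j = "\<lambda>(n,p). (n*p, p)"])
    fix x assume "x \<in> D"
    then obtain n p where x: "x = (n,p)" "n \<ge> 1" "prime p" by (auto simp: D_def Pr_def)
    then have pp: "p > 0" by (simp add: prime_gt_0_nat)
    show "(\<lambda>(m,p). (m div p, p)) ((\<lambda>(n,p). (n*p, p)) x) = x" using x pp by simp
    show "(\<lambda>(n,p). (n*p, p)) x \<in> D'" using x pp by (auto simp: D'_def in_prime_factors_iff)
    show "G ((\<lambda>(n,p). (n*p, p)) x) = a x" using x pp by (simp add: G_def)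
  next
    fix y assume "y \<in> D'"
    then obtain m p where y: "y = (m,p)" "m \<ge> 1" "prime p" "p dvd m"
      by (auto simp: D'_def in_prime_factors_iff)
    show "(\<lambda>(n,p). (n*p, p)) ((\<lambda>(m,p). (m div p, p)) y) = y" using y by simp
    have "m div p \<ge> 1" using y by (metis dvd_mult_div_cancel less_one mult_0_right not_less)
    then show "(\<lambda>(m,p). (m div p, p)) y \<in> D" using y by (simp add: D_def Pr_def)
  qed simp
  with aS have GS: "(G has_sum S) D'" by simp
  have Gm: "((\<lambda>m. \<Sum>p\<in>prime_factors m. G (m,p)) has_sum S) {1..}"
    by (rule has_sum_Sigma'[OF GS[unfolded D'_def]]) (rule has_sum_finiteI; simp)
  have Z: "\<And>m. m \<in> {1..} \<Longrightarrow> (\<Sum>p\<in>prime_factors m. G (m,p)) = ee s m - (if m = 1 then 1 else 0)"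
  proof -
    fix m :: nat assume "m \<in> {1..}"
    then have m1: "1 \<le> m" by simp
    show "(\<Sum>p\<in>prime_factors m. G (m,p)) = ee s m - (if m = 1 then 1 else 0)"
      unfolding G_def a_def prod.case by (rule z_eq[OF m1])
  qed
  have zS: "((\<lambda>m. ee s m - (if m = 1 then 1 else 0)) has_sum S) {1..}"
    using has_sum_cong[OF Z] Gm by (rule iffD1)
  have e1: "(ee s has_sum zeta_series s) {1..}"
    using ee_has_sum_zeta[OF assms] by (subst has_sum_cong_neutral) (auto simp: Suc_le_eq)
  have e2: "((\<lambda>m::nat. - (if m = 1 then 1 else 0)) has_sum (-1 :: complex)) {1..}"
    by (rule has_sum_finite_neutralI[where B = "{1}"]) auto
  have "((\<lambda>m. ee s m - (if m = 1 then 1 else 0)) has_sum (zeta_series s - 1)) {1..}"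
    using has_sum_add[OF e1 e2] by simp
  with zS have Seq: "S = zeta_series s - 1" using has_sum_unique by blast
  have "(T has_sum S) UNIV"
    using TS by (subst has_sum_cong_neutral[where T = "{1..}"]) (auto simp: T_def Suc_le_eq)
  then have "T sums S" by (rule has_sum_imp_sums)
  then have "(\<lambda>m. T (Suc m)) sums S" by (subst sums_Suc_iff) (simp add: T_def)
  moreover have ee_eta: "ee s = (\<lambda>n. 1 / (of_nat n) powr s)" by (rule ext) (simp add: ee_def)
  ultimately show ?thesis unfolding Seq T_def P_def Pr_def ee_eta by (simp add: Let_def)
qed

end
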